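(* Let $q>0$ and $s>0$. For $n\in\mathbb{N}=\{1,2,3,\dots\}$ put \[ n_q:=\frac{\Gamma(nq+1)}{\Gamma((n-1)q+1)}, \] and put $0_q:=0$. Then the series \[ \sum_{n=0}^{\infty}e^{-s\,n_q} \] converges, i.e. $\sum_{n=0}^{\infty}e^{-s\,n_q}<\infty$.
   Context: $\Gamma$ denotes the Euler Gamma function, $\Gamma(z)=\int_0^\infty t^{z-1}e^{-t}\,dt$ for $\operatorname{Re} z>0$. The numbers $n_q$ are the eigenvalues of the operator $a^\dagger a$ on the Mittag-Leffler Fock space of the slitted plane. In that space the eigenvalue corresponding to $n=0$ is $0$. *)

theory Defs
  imports "HOL-Analysis.Analysis"
begin

definition nq :: "real \<Rightarrow> nat \<Rightarrow> real" where
  "nq q n = (if n = 0 then 0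
             else Gamma (real n * q + 1) / Gamma ((real n - 1) * q + 1))"

end

theory Submission imports Defs "HOL-Real_Asymp.Real_Asymp" begin
lemma A: fixes c q :: real assumes "c>0" "q>0"
  shows "eventually (\<lambda>n::nat. exp(-c*(real n - 1) powr q) \<le> 1/real n^2) at_top"
  using assms by real_asymp

lemma B: fixes q :: real and n :: nat assumes q: "q>0" and n: "n \<ge> 2"
  shows "nq q n \<ge> exp (- q * euler_mascheroni) * ((real n - 1) * q) powr q"
proof -
  define x where "x = (real n - 1) * q + 1"
  have x1: "x \<ge> 1" using q n by (simp add: x_def)
  have xq: "x + q = real n * q + 1" by (simp add: x_def algebra_simps)
  have "\<exists>\<xi>. x < \<xi> \<and> \<xi> < x + q \<and> ln_Gamma (x+q) - ln_Gamma x = (x + q - x) * Digamma \<xi>"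
    using x1 q by (intro MVT2 derivative_intros impI allI) (auto elim!: nonpos_Ints_cases)
  then obtain \<xi> where xi: "x < \<xi>" "ln_Gamma (x+q) - ln_Gamma x = q * Digamma \<xi>" by auto
  define m where "m = nat (floor ((real n - 1) * q))"
  have m1: "real m + 1 \<ge> (real n - 1) * q"
  proof -
    have "(real n - 1) * q \<ge> 0" using q n by simp
    hence "real (nat (floor ((real n - 1) * q))) = of_int (floor ((real n - 1) * q))" by simp
    thus ?thesis unfolding m_def by linarith
  qed
  have m2: "real (Suc m) \<le> x" unfolding m_def x_def using q n by simp
  have "Digamma (real (Suc m)) \<le> Digamma \<xi>"
    using m2 xi by (intro Digamma_real_mono) auto
  hence "harm m - euler_mascheroni \<le> Digamma \<xi>"
    using Digamma_of_nat[of m] by (metis of_real_of_nat_eq of_real_eq_iff)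
  moreover have "ln (real m + 1) \<le> harm m" by (rule harm_ge_ln)
  moreover have "ln ((real n - 1) * q) \<le> ln (real m + 1)" using m1 q n by simp
  ultimately have D: "ln ((real n - 1) * q) - euler_mascheroni \<le> Digamma \<xi>" by linarith
  have pos: "(real n - 1) * q > 0" using q n by simp
  have "nq q n = Gamma (x+q) / Gamma x" using n unfolding xq by (simp add: nq_def x_def)
  also have "\<dots> = exp (ln_Gamma (x+q) - ln_Gamma x)"
    using x1 q by (simp add: Gamma_real_pos_exp exp_diff)
  also have "\<dots> = exp (q * Digamma \<xi>)" using xi by simp
  also have "\<dots> \<ge> exp (q * (ln ((real n - 1) * q) - euler_mascheroni))"
    using D q by simp
  also have "exp (q * (ln ((real n - 1) * q) - euler_mascheroni))
      = exp (- q * euler_mascheroni) * ((real n - 1) * q) powr q"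
    using pos n q by (simp add: powr_def exp_add[symmetric] algebra_simps)
  finally show ?thesis .
qed

theorem mainTheorem1:
  fixes q s :: real
  assumes "q > 0" and "s > 0"
  shows "summable (\<lambda>n::nat. exp (- s * nq q n))"
proof -
  define c where "c = s * exp (- q * euler_mascheroni) * q powr q"
  have c: "c > 0" using assms by (simp add: c_def)
  have ev: "eventually (\<lambda>n::nat. norm (exp (- s * nq q n)) \<le> 1/real n^2) at_top"
    using A[OF c assms(1)] eventually_ge_at_top[of 2]
  proof eventually_elim
    case (elim n)
    have "real n - 1 \<ge> 0" using elim by simp
    hence "((real n - 1) * q) powr q = (real n - 1) powr q * q powr q"
      using assms by (simp add: powr_mult)
    hence "c * (real n - 1) powr q \<le> s * nq q n"
      using B[OF assms(1) elim(2)] assms unfolding c_def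
      by (metis (no_types, lifting) mult.assoc mult.commute mult_left_mono less_imp_le)
    hence "exp (- s * nq q n) \<le> exp (-c*(real n - 1) powr q)" by simp
    with elim show ?case by (smt (verit) exp_ge_zero real_norm_def)
  qed
  show ?thesis
    by (rule summable_comparison_test_ev[OF ev]) (simp add: inverse_power_summable divide_inverse)
qed
end
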